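(* Under the hypotheses and notation of the following context, every basis $[\vec b_1,\dots,\vec b_n]$ of $\tilde{\mathcal{L}}$ that minimizes $\max_{1\le i\le n}\|\vec b_i\|_q$ over all bases of $\tilde{\mathcal{L}}$ does not contain $\pm\vec v_1$, the shortest nonzero vector of $\tilde{\mathcal{L}}$.
   Context: Let $q\in\mathbb{N}_+$, $p\ge7$ prime, $n\ge2$, $\sigma\in\{2,3\}^{n-1}$ with $\sum_{i=1}^{n-1}\sigma_i^q=p^q-1$ and $\|k\sigma\bmod p\|_q>\|\sigma\bmod p\|_q$ for all integers $k\not\equiv0,\pm1\pmod p$, where $|\alpha|_p=\min_{z\in\mathbb{Z}}|\alpha-zp|$ and $\|\vec x\bmod p\|_q=(\sum_i|x_i|_p^q)^{1/q}$; if $q\ge2$ assume $4n-3>2p$. Put $\vec u=(1,\sigma)\in\mathbb{R}^n$, $W_i=p\vec e_i$, $\mathcal{L}_+=\operatorname{span}_{\mathbb{Z}}(W_1,\dots,W_n,\vec u)$, and fix $R>p$ with $\mathcal{L}_+\cap\mathcal{B}_q(R)=\{\vec0,\pm W_1,\dots,\pm W_n,\pm\vec u\}$, where $\mathcal{B}_q(r)=\{\vec x:\|\vec x\|_q<r\}$ and $\|\vec x\|_q=(\sum_i|x_i|^q)^{1/q}$. Fix $\varepsilon>0$ with $\varepsilon<\frac{R-p}{2}$ and $\varepsilon^q<\frac{p^q(R^q-p^q)}{((n-1)(p-1)+1)^q}$. In $\mathbb{R}^{n+1}$ let $\vec v_1=(W_1,\varepsilon)$, $\vec v_i=(W_i,2\varepsilon)$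 for $2\le i\le n$, $\tilde{\vec u}=\frac1p\sum_{i=1}^nu_i\vec v_i$, and $\tilde{\mathcal{L}}=\operatorname{span}_{\mathbb{Z}}(\vec v_1,\dots,\vec v_n,\tilde{\vec u})$, a lattice of rank $n$. *)

theory Defs
  imports Complex_Main "HOL-Computational_Algebra.Primes"
begin

text \<open>Vectors of R^m are represented as functions nat => real, coordinates indexed by 1..m.\<close>

definition qnorm :: "nat \<Rightarrow> nat \<Rightarrow> (nat \<Rightarrow> real) \<Rightarrow> real" where
  "qnorm q m x = (\<Sum>i\<in>{1..m}. \<bar>x i\<bar> ^ q) powr (1 / real q)"

definition qball :: "nat \<Rightarrow> nat \<Rightarrow> real \<Rightarrow> (nat \<Rightarrow> real) set" where
  "qball q m r = {x. qnorm q m x < r}"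

definition absp :: "nat \<Rightarrow> real \<Rightarrow> real" where
  "absp p a = Inf {\<bar>a - of_int z * real p\<bar> | z. True}"

definition qnorm_mod :: "nat \<Rightarrow> nat \<Rightarrow> nat \<Rightarrow> (nat \<Rightarrow> real) \<Rightarrow> real" where
  "qnorm_mod q p m x = (\<Sum>i\<in>{1..m}. absp p (x i) ^ q) powr (1 / real q)"

definition int_span :: "(nat \<Rightarrow> real) set \<Rightarrow> (nat \<Rightarrow> real) set" where
  "int_span B = {(\<lambda>j. \<Sum>b\<in>F. of_int (c b) * b j) | F c. finite F \<and> F \<subseteq> B}"

definition is_lattice_basis :: "(nat \<Rightarrow> real) set \<Rightarrow> nat \<Rightarrow> (nat \<Rightarrow> nat \<Rightarrow> real) \<Rightarrow> bool" where
  "is_lattice_basis L n b \<longleftrightarrow> (\<forall>i\<in>{1..n}. b i \<in> L) \<and>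
     (\<forall>x\<in>L. \<exists>!c::nat \<Rightarrow> int. (\<forall>i. i \<notin> {1..n} \<longrightarrow> c i = 0) \<and>
                 x = (\<lambda>j. \<Sum>i\<in>{1..n}. of_int (c i) * b i j))"

definition unitvec :: "nat \<Rightarrow> nat \<Rightarrow> real" where
  "unitvec i = (\<lambda>j. if j = i then 1 else 0)"

end

theory Submission
  imports Defs
begin

lemma span_aux:
  assumes "finite F" "F \<subseteq> h ` I" "finite I"
  shows "\<exists>a. (\<lambda>j. \<Sum>b\<in>F. of_int (c b) * b j) = (\<lambda>j. \<Sum>i\<in>I. of_int (a i) * h i j)"
  using assms
proof (induction F rule: finite_induct)
  case empty
  show ?case by (rule exI[of _ "\<lambda>_. 0"]) simp
next
  case (insert x F)
  then obtain a where a: "(\<lambda>j. \<Sum>b\<in>F. of_int (c b) * b j) = (\<lambda>j. \<Sum>i\<in>I. of_int (a i) * h i j)" by auto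
  from insert obtain i0 where i0: "i0 \<in> I" "x = h i0" by auto
  define a' where "a' = a(i0 := a i0 + c x)"
  have "(\<Sum>i\<in>I. of_int (a' i) * h i j) = (\<Sum>b\<in>insert x F. of_int (c b) * b j)" for j
  proof -
    have "(\<Sum>i\<in>I. of_int (a' i) * h i j) = of_int (a' i0) * h i0 j + (\<Sum>i\<in>I-{i0}. of_int (a' i) * h i j)"
      using sum.remove[OF assms(3) i0(1)] by blast
    also have "(\<Sum>i\<in>I-{i0}. of_int (a' i) * h i j) = (\<Sum>i\<in>I-{i0}. of_int (a i) * h i j)"
      by (rule sum.cong) (auto simp: a'_def)
    also have "(\<Sum>i\<in>I. of_int (a i) * h i j) = of_int (a i0) * h i0 j + (\<Sum>i\<in>I-{i0}. of_int (a i) * h i j)"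
      using sum.remove[OF assms(3) i0(1)] by blast
    then have "(\<Sum>i\<in>I-{i0}. of_int (a i) * h i j) = (\<Sum>i\<in>I. of_int (a i) * h i j) - of_int (a i0) * h i0 j" by simp
    finally show ?thesis using fun_cong[OF a, of j] insert(1,2) i0 by (simp add: a'_def algebra_simps)
  qed
  then show ?case by (intro exI[of _ a']) (simp add: fun_eq_iff)
qed

lemma int_span_image:
  assumes "finite I"
  shows "int_span (h ` I) = {(\<lambda>j. \<Sum>i\<in>I. of_int (a i) * h i j) | a. True}"
proof
  show "int_span (h ` I) \<subseteq> {(\<lambda>j. \<Sum>i\<in>I. of_int (a i) * h i j) | a. True}"
    unfolding int_span_def using span_aux[OF _ _ assms] by blast
next
  show "{(\<lambda>j. \<Sum>i\<in>I. of_int (a i) * h i j) | a. True} \<subseteq> int_span (h ` I)"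
  proof
    fix x assume "x \<in> {(\<lambda>j. \<Sum>i\<in>I. of_int (a i) * h i j) | a. True}"
    then obtain a where x: "x = (\<lambda>j. \<Sum>i\<in>I. of_int (a i) * h i j)" by auto
    define c where "c b = (\<Sum>i\<in>{i. i \<in> I \<and> h i = b}. a i)" for b
    have "(\<Sum>i\<in>I. of_int (a i) * h i j) = (\<Sum>b\<in>h ` I. of_int (c b) * b j)" for j
    proof -
      have "(\<Sum>i\<in>I. of_int (a i) * h i j) = (\<Sum>b\<in>h ` I. \<Sum>i\<in>{i. i \<in> I \<and> h i = b}. of_int (a i) * h i j)"
        by (rule sum.image_gen[OF assms])
      also have "\<dots> = (\<Sum>b\<in>h ` I. of_int (c b) * b j)"
        by (rule sum.cong) (auto simp: c_def sum_distrib_right intro!: sum.cong)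
      finally show ?thesis .
    qed
    then show "x \<in> int_span (h ` I)" unfolding int_span_def x using assms by blast
  qed
qed

lemma superadd_pow:
  fixes a b :: real assumes "a \<ge> 0" "b \<ge> 0" "q \<ge> 1"
  shows "a ^ q + b ^ q \<le> (a + b) ^ q"
  using assms(3)
proof (induction q rule: dec_induct)
  case base then show ?case by simp
next
  case (step m)
  have "a ^ Suc m + b ^ Suc m \<le> (a+b) * (a^m + b^m)"
    using assms by (simp add: algebra_simps)
  also have "\<dots> \<le> (a+b) * (a+b)^m" using step assms by (intro mult_left_mono) auto
  finally show ?case by simp
qed

lemma powr_lt_root:
  fixes A R :: real assumes "0 \<le> A" "A < R ^ q" "R > 0" "q \<ge> 1"
  shows "A powr (1 / real q) < R"
proof -
  have "A powr (1/real q) < (R^q) powr (1/real q)"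
    using assms by (intro powr_less_mono2) auto
  also have "(R^q) powr (1/real q) = R"
    using assms by (simp add: powr_realpow[symmetric] powr_powr)
  finally show ?thesis .
qed

definition Lmap :: "nat \<Rightarrow> real \<Rightarrow> real \<Rightarrow> (nat \<Rightarrow> real) \<Rightarrow> nat \<Rightarrow> real" where
  "Lmap n e p y = (\<lambda>j. if j = 0 then 0 else if j \<le> n then y j else if j = n + 1 then
      (e / p) * (\<Sum>m\<in>{1..n}. (if m = 1 then 1 else 2) * y m) else 0)"

lemma Lmap_sum:
  "Lmap n e p (\<lambda>j. \<Sum>i\<in>I. of_int (a i) * y i j) = (\<lambda>j. \<Sum>i\<in>I. of_int (a i) * Lmap n e p (y i) j)"
proof
  fix j
  show "Lmap n e p (\<lambda>j. \<Sum>i\<in>I. of_int (a i) * y i j) j = (\<Sum>i\<in>I. of_int (a i) * Lmap n e p (y i) j)"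
  proof (cases "j = n + 1")
    case True
    then show ?thesis
      by (simp add: Lmap_def sum_distrib_left algebra_simps) (rule sum.swap)
  qed (simp add: Lmap_def)
qed

lemma Lmap_neg: "Lmap n e p (\<lambda>j. - y j) = (\<lambda>j. - Lmap n e p y j)"
  by (auto simp: Lmap_def fun_eq_iff sum_negf)

lemma Lmap_zero: "Lmap n e p (\<lambda>j. 0) = (\<lambda>j. 0)"
  by (auto simp: Lmap_def fun_eq_iff)

theorem lemma4p7:
  fixes q p n :: nat and \<sigma> :: "nat \<Rightarrow> int" and R \<epsilon> :: real
    and W :: "nat \<Rightarrow> nat \<Rightarrow> real" and u :: "nat \<Rightarrow> real"
    and v :: "nat \<Rightarrow> nat \<Rightarrow> real" and ut :: "nat \<Rightarrow> real"
    and Lp Lt :: "(nat \<Rightarrow> real) set"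
  assumes q_pos: "q \<ge> 1"
    and p_prime: "prime p" and p_ge: "p \<ge> 7"
    and n_ge: "n \<ge> 2"
    and sigma_vals: "\<forall>i\<in>{1..n-1}. \<sigma> i \<in> {2, 3}"
    and sigma_sum: "(\<Sum>i\<in>{1..n-1}. \<sigma> i ^ q) = int p ^ q - 1"
    and sigma_min: "\<forall>k::int. \<not> (k mod int p = 0) \<and> \<not> ((k - 1) mod int p = 0) \<and> \<not> ((k + 1) mod int p = 0)
         \<longrightarrow> qnorm_mod q p (n-1) (\<lambda>i. of_int (k * \<sigma> i)) > qnorm_mod q p (n-1) (\<lambda>i. of_int (\<sigma> i))"
    and q2: "q \<ge> 2 \<longrightarrow> 4 * n - 3 > 2 * p"
    and u_def: "u = (\<lambda>j. if j = 1 then 1 else if 2 \<le> j \<and> j \<le> n then of_int (\<sigma> (j - 1)) else 0)"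
    and W_def: "\<forall>i. W i = (\<lambda>j. real p * unitvec i j)"
    and Lp_def: "Lp = int_span ({W i | i. i \<in> {1..n}} \<union> {u})"
    and R_gt: "R > real p"
    and R_ball: "Lp \<inter> qball q n R = {(\<lambda>j. 0)} \<union> {W i | i. i \<in> {1..n}} \<union> {(\<lambda>j. - W i j) | i. i \<in> {1..n}} \<union> {u, (\<lambda>j. - u j)}"
    and eps_pos: "\<epsilon> > 0"
    and eps1: "\<epsilon> < (R - real p) / 2"
    and eps2: "\<epsilon> ^ q < real p ^ q * (R ^ q - real p ^ q) / (real ((n - 1) * (p - 1) + 1)) ^ q"
    and v_def: "\<forall>i. v i = (\<lambda>j. if j \<le> n then W i j else if j = n + 1 then (if i = 1 then \<epsilon> else 2 * \<epsilon>) else 0)"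
    and ut_def: "ut = (\<lambda>j. (1 / real p) * (\<Sum>i\<in>{1..n}. u i * v i j))"
    and Lt_def: "Lt = int_span ({v i | i. i \<in> {1..n}} \<union> {ut})"
  shows "\<forall>b. is_lattice_basis Lt n b \<and>
           (\<forall>b'. is_lattice_basis Lt n b' \<longrightarrow>
              (MAX i\<in>{1..n}. qnorm q (n + 1) (b i)) \<le> (MAX i\<in>{1..n}. qnorm q (n + 1) (b' i)))
         \<longrightarrow> (\<forall>i\<in>{1..n}. b i \<noteq> v 1 \<and> b i \<noteq> (\<lambda>j. - v 1 j))"
proof -
  have pp: "real p > 0" using p_ge by simp
  have n1: "n \<ge> 1" using n_ge by simp
  define ht where "ht = (\<lambda>i::nat. if i = 0 then ut else v i)"
  define hp where "hp = (\<lambda>i::nat. if i = 0 then u else W i)"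
  define L where "L = Lmap n \<epsilon> (real p)"
  have set01: "{0..n} = insert 0 {1..n}" by auto
  have "{v i | i. i \<in> {1..n}} \<union> {ut} = ht ` {0..n}"
    unfolding set01 ht_def by (auto simp: image_iff)
  then have Lt_eq: "Lt = {(\<lambda>j. \<Sum>i\<in>{0..n}. of_int (a i) * ht i j) | a. True}"
    using Lt_def int_span_image[of "{0..n}" ht] by simp
  have "{W i | i. i \<in> {1..n}} \<union> {u} = hp ` {0..n}"
    unfolding set01 hp_def by (auto simp: image_iff)
  then have Lp_eq: "Lp = {(\<lambda>j. \<Sum>i\<in>{0..n}. of_int (a i) * hp i j) | a. True}"
    using Lp_def int_span_image[of "{0..n}" hp] by simp
  have Wj: "W k j = (if j = k then real p else 0)" for k j
    using W_def by (simp add: unitvec_def)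
  have vj: "v k j = (if j = k then real p else 0)" if "k \<in> {1..n}" "j \<le> n" for k j
    using v_def that Wj by simp
  have vn1: "v k (n+1) = (if k = 1 then \<epsilon> else 2 * \<epsilon>)" for k
    using v_def by simp
  have vbig: "v k j = 0" if "j > n + 1" for k j
    using v_def that by simp
  have u1: "u 1 = 1" using u_def by simp
  have uj: "u j = of_int (\<sigma> (j - 1))" if "j \<in> {2..n}" for j using u_def that by simp
  have u0: "u j = 0" if "j = 0 \<or> j > n" for j using u_def that n1 by auto
  have utj: "ut j = u j" if "j \<in> {1..n}" for j
  proof -
    have "(\<Sum>i\<in>{1..n}. u i * v i j) = (\<Sum>i\<in>{1..n}. if i = j then u j * real p else 0)"
      using that by (intro sum.cong) (auto simp: vj)
    also have "\<dots> = u j * real p" using that by simp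
    finally show ?thesis using ut_def pp by simp
  qed
  have ut0: "ut j = 0" if "j = 0 \<or> j > n + 1" for j
  proof -
    have "(\<Sum>i\<in>{1..n}. u i * v i j) = 0"
      using that by (intro sum.neutral) (auto simp: vj vbig)
    then show ?thesis using ut_def by simp
  qed
  have utn1: "ut (n+1) = (1 / real p) * (\<Sum>i\<in>{1..n}. u i * (if i = 1 then \<epsilon> else 2 * \<epsilon>))"
    using ut_def vn1 by simp
  have htL: "ht i = L (hp i)" if "i \<in> {0..n}" for i
  proof (cases "i = 0")
    case True
    have "ut j = L u j" for j
    proof -
      consider "j = 0" | "j \<in> {1..n}" | "j = n + 1" | "j > n + 1" by fastforce
      then show ?thesis
      proof cases
        case 3
        have "(\<Sum>i\<in>{1..n}. u i * (if i = 1 then \<epsilon> else 2 * \<epsilon>)) = \<epsilon> * (\<Sum>m\<in>{1..n}. (if m = 1 then 1 else 2) * u m)"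
          by (simp add: sum_distrib_left) (intro sum.cong, auto)
        then show ?thesis using 3 utn1 by (simp add: L_def Lmap_def)
      qed (auto simp: L_def Lmap_def utj ut0)
    qed
    then show ?thesis using True by (simp add: ht_def hp_def fun_eq_iff)
  next
    case False
    then have i: "i \<in> {1..n}" using that by auto
    have "v i j = L (W i) j" for j
    proof -
      consider "j = 0" | "j \<in> {1..n}" | "j = n + 1" | "j > n + 1" by fastforce
      then show ?thesis
      proof cases
        case 1 then show ?thesis using v_def Wj i by (simp add: L_def Lmap_def)
      next
        case 2 then show ?thesis using v_def by (simp add: L_def Lmap_def)
      next
        case 3
        have "(\<Sum>m\<in>{1..n}. (if m = 1 then 1 else 2) * W i m) = (\<Sum>m\<in>{1..n}. if m = i then (if i = 1 then 1 else 2) * real p else 0)"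
          by (intro sum.cong) (auto simp: Wj)
        also have "\<dots> = (if i = 1 then 1 else 2) * real p" using i by simp
        finally show ?thesis using 3 vn1 pp by (simp add: L_def Lmap_def)
      next
        case 4 then show ?thesis using vbig by (simp add: L_def Lmap_def)
      qed
    qed
    then show ?thesis using False by (simp add: ht_def hp_def fun_eq_iff)
  qed

  have Lt_rep: "\<exists>y\<in>Lp. x = L y" if xL: "x \<in> Lt" for x
  proof -
    obtain a where a: "x = (\<lambda>j. \<Sum>i\<in>{0..n}. of_int (a i) * ht i j)" using xL Lt_eq by auto
    have "x = (\<lambda>j. \<Sum>i\<in>{0..n}. of_int (a i) * L (hp i) j)"
      unfolding a by (intro ext sum.cong) (auto simp: htL)
    also have "\<dots> = L (\<lambda>j. \<Sum>i\<in>{0..n}. of_int (a i) * hp i j)"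
      unfolding L_def by (rule Lmap_sum[symmetric])
    finally show ?thesis using Lp_eq by blast
  qed
  have Lco: "L y j = y j" if "j \<in> {1..n}" for y j using that by (simp add: L_def Lmap_def)
  have norm_proj: "qnorm q n y \<le> qnorm q (n+1) (L y)" for y
  proof -
    have "(\<Sum>i\<in>{1..n}. \<bar>y i\<bar> ^ q) = (\<Sum>i\<in>{1..n}. \<bar>L y i\<bar> ^ q)"
      by (intro sum.cong) (auto simp: Lco)
    also have "\<dots> \<le> (\<Sum>i\<in>{1..n+1}. \<bar>L y i\<bar> ^ q)"
      by (intro sum_mono2) auto
    finally show ?thesis unfolding qnorm_def
      by (intro powr_mono2) (auto intro: sum_nonneg)
  qed
  have small: "x = (\<lambda>j. 0) \<or> (\<exists>k\<in>{1..n}. x = v k \<or> x = (\<lambda>j. - v k j)) \<or> x = ut \<or> x = (\<lambda>j. - ut j)"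
    if xL: "x \<in> Lt" and xR: "qnorm q (n+1) x < R" for x
  proof -
    obtain y where y: "y \<in> Lp" "x = L y" using Lt_rep xL by blast
    have "qnorm q n y < R" using norm_proj[of y] y xR by simp
    then have "y \<in> Lp \<inter> qball q n R" using y by (simp add: qball_def)
    then have "y \<in> {(\<lambda>j. 0)} \<union> {W i | i. i \<in> {1..n}} \<union> {(\<lambda>j. - W i j) | i. i \<in> {1..n}} \<union> {u, (\<lambda>j. - u j)}"
      using R_ball by simp
    moreover have "L u = ut" using htL[of 0] by (simp add: ht_def hp_def)
    moreover have "L (W k) = v k" if "k \<in> {1..n}" for k using htL[of k] that by (simp add: ht_def hp_def)
    ultimately show ?thesis using y(2) Lmap_neg Lmap_zero unfolding L_def by auto
  qed
  have sig: "\<sigma> i = 2 \<or> \<sigma> i = 3" if "i \<in> {1..n-1}" for i using sigma_vals that by auto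
  have ujs: "u j = 2 \<or> u j = 3" if "j \<in> {2..n}" for j
  proof -
    have "j - 1 \<in> {1..n-1}" using that by auto
    then show ?thesis using uj[OF that] sig[of "j-1"] by auto
  qed
  have pq: "real p ^ q = 1 + (\<Sum>j\<in>{2..n}. \<bar>u j\<bar> ^ q)"
  proof -
    have "(\<Sum>j\<in>{2..n}. \<bar>u j\<bar> ^ q) = (\<Sum>j\<in>{Suc 1..Suc (n-1)}. real_of_int (\<sigma> (j - 1) ^ q))"
    proof (intro sum.cong)
      fix j assume j: "j \<in> {Suc 1..Suc (n-1)}"
      then have j': "j \<in> {2..n}" using n1 by auto
      have "u j \<ge> 0" using ujs[OF j'] by auto
      then show "\<bar>u j\<bar> ^ q = real_of_int (\<sigma> (j - 1) ^ q)" using uj[OF j'] by simp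
    qed (use n1 in auto)
    also have "\<dots> = (\<Sum>i\<in>{1..n-1}. real_of_int (\<sigma> i ^ q))"
      by (subst sum.shift_bounds_cl_Suc_ivl) simp
    also have "\<dots> = real_of_int (int p ^ q - 1)"
      using sigma_sum by (metis of_int_sum)
    finally show ?thesis by simp
  qed
  have Rpos: "R > 0" using R_gt pp by linarith
  have norm_v: "qnorm q (n+1) (v i) < R" if i: "i \<in> {2..n}" for i
  proof -
    have "(\<Sum>j\<in>{1..n+1}. \<bar>v i j\<bar> ^ q) = \<bar>v i (n+1)\<bar> ^ q + (\<Sum>j\<in>{1..n}. \<bar>v i j\<bar> ^ q)"
      by (simp add: sum.nat_ivl_Suc')
    also have "(\<Sum>j\<in>{1..n}. \<bar>v i j\<bar> ^ q) = (\<Sum>j\<in>{1..n}. if j = i then real p ^ q else 0)"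
      using i q_pos by (intro sum.cong) (auto simp: vj)
    also have "\<dots> = real p ^ q" using i by simp
    also have "\<bar>v i (n+1)\<bar> ^ q = (2 * \<epsilon>) ^ q" using i vn1 eps_pos by simp
    also have "(2 * \<epsilon>) ^ q + real p ^ q \<le> (real p + 2 * \<epsilon>) ^ q"
      using superadd_pow[of "real p" "2*\<epsilon>" q] eps_pos q_pos by simp
    also have "\<dots> < R ^ q" using eps1 eps_pos q_pos by (intro power_strict_mono) auto
    finally have "(\<Sum>j\<in>{1..n+1}. \<bar>v i j\<bar> ^ q) < R ^ q" .
    then show ?thesis unfolding qnorm_def using Rpos q_pos
      by (intro powr_lt_root) (auto intro!: sum_nonneg add_nonneg_nonneg)
  qed
  define M where "M = real ((n - 1) * (p - 1) + 1)"
  have Mpos: "M > 0" unfolding M_def by (simp only: of_nat_0_less_iff)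
  have norm_ut: "qnorm q (n+1) ut < R"
  proof -
    have S: "(\<Sum>i\<in>{2..n}. u i) \<le> 3 * real (n - 1)"
    proof -
      have "(\<Sum>i\<in>{2..n}. u i) \<le> (\<Sum>i\<in>{2..n}. 3)" by (intro sum_mono) (use ujs in fastforce)
      then show ?thesis by simp
    qed
    have S0: "(\<Sum>i\<in>{2..n}. u i) \<ge> 0" by (intro sum_nonneg) (use ujs in fastforce)
    have "(\<Sum>i\<in>{1..n}. u i * (if i = 1 then \<epsilon> else 2 * \<epsilon>)) = u 1 * \<epsilon> + (\<Sum>i\<in>{2..n}. u i * (2 * \<epsilon>))"
      using n1 by (subst sum.atLeast_Suc_atMost) (auto intro!: sum.cong)
    also have "\<dots> = \<epsilon> * (1 + 2 * (\<Sum>i\<in>{2..n}. u i))"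
      using u1 by (simp add: sum_distrib_left sum_distrib_right algebra_simps)
    finally have un: "ut (n+1) = \<epsilon> * (1 + 2 * (\<Sum>i\<in>{2..n}. u i)) / real p" using utn1 by simp
    have Mge: "1 + 2 * (\<Sum>i\<in>{2..n}. u i) \<le> M"
    proof -
      have "real ((n - 1) * (p - 1) + 1) = real (n-1) * (real p - 1) + 1" using p_ge by (simp add: of_nat_diff)
      moreover have "6 * real (n-1) \<le> real (n-1) * (real p - 1)" 
      proof -
        have "6 \<le> real p - 1" using p_ge by simp
        then have "real (n-1) * 6 \<le> real (n-1) * (real p - 1)" by (intro mult_left_mono) auto
        then show ?thesis by simp
      qed
      ultimately show ?thesis unfolding M_def using S by linarith
    qed
    have ut_nn: "ut (n+1) \<ge> 0" using un eps_pos S0 pp by simp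
    have "\<bar>ut (n+1)\<bar> ^ q \<le> (\<epsilon> * M / real p) ^ q"
    proof -
      have "\<bar>ut (n+1)\<bar> \<le> \<epsilon> * M / real p"
        using ut_nn un eps_pos pp Mge S0 by (auto intro!: divide_right_mono mult_left_mono)
      then show ?thesis by (intro power_mono) auto
    qed
    also have "\<dots> = \<epsilon> ^ q * M ^ q / real p ^ q" by (simp add: power_divide power_mult_distrib)
    also have "\<dots> < R ^ q - real p ^ q"
    proof -
      have "\<epsilon> ^ q * M ^ q < real p ^ q * (R ^ q - real p ^ q)"
        using eps2 Mpos unfolding M_def by (simp add: pos_less_divide_eq)
      then show ?thesis using pp by (simp add: pos_divide_less_eq mult.commute)
    qed
    finally have lt: "\<bar>ut (n+1)\<bar> ^ q < R ^ q - real p ^ q" .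
    have "(\<Sum>j\<in>{1..n+1}. \<bar>ut j\<bar> ^ q) = \<bar>ut (n+1)\<bar> ^ q + (\<Sum>j\<in>{1..n}. \<bar>ut j\<bar> ^ q)"
      by (simp add: sum.nat_ivl_Suc')
    also have "(\<Sum>j\<in>{1..n}. \<bar>ut j\<bar> ^ q) = (\<Sum>j\<in>{1..n}. \<bar>u j\<bar> ^ q)"
      by (intro sum.cong) (auto simp: utj)
    also have "\<dots> = \<bar>u 1\<bar> ^ q + (\<Sum>j\<in>{2..n}. \<bar>u j\<bar> ^ q)"
      using n1 by (subst sum.atLeast_Suc_atMost) (auto simp: numeral_2_eq_2)
    also have "\<dots> = real p ^ q" using pq u1 by simp
    finally have "(\<Sum>j\<in>{1..n+1}. \<bar>ut j\<bar> ^ q) < R ^ q" using lt by simp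
    then show ?thesis unfolding qnorm_def using Rpos q_pos
      by (intro powr_lt_root) (auto intro!: sum_nonneg add_nonneg_nonneg)
  qed
  have split1: "(\<Sum>i\<in>{1..n}. f i) = f 1 + (\<Sum>i\<in>{2..n}. f i)" for f :: "nat \<Rightarrow> real"
    using n1 by (subst sum.atLeast_Suc_atMost) (auto simp: numeral_2_eq_2)
  have split0: "(\<Sum>i\<in>{0..n}. f i) = f 0 + (\<Sum>i\<in>{1..n}. f i)" for f :: "nat \<Rightarrow> real"
    by (simp add: sum.atLeast_Suc_atMost)
  have ht_in: "ht i \<in> Lt" if "i \<in> {0..n}" for i
  proof -
    have "(\<lambda>j. \<Sum>k\<in>{0..n}. of_int (if k = i then 1 else 0) * ht k j) = ht i"
    proof
      fix j
      have "(\<Sum>k\<in>{0..n}. of_int (if k = i then 1 else 0) * ht k j) = (\<Sum>k\<in>{0..n}. if k = i then ht i j else 0)"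
        by (intro sum.cong) auto
      then show "(\<Sum>k\<in>{0..n}. of_int (if k = i then 1 else 0) * ht k j) = ht i j" using that by simp
    qed
    then show ?thesis unfolding Lt_eq by (intro CollectI exI[of _ "\<lambda>k. if k = i then 1 else 0"]) simp
  qed
  have ut_in: "ut \<in> Lt" using ht_in[of 0] by (simp add: ht_def)
  have v_in: "v k \<in> Lt" if "k \<in> {1..n}" for k using ht_in[of k] that by (simp add: ht_def)
  have e4: "real p * ut j = v 1 j + (\<Sum>i\<in>{2..n}. u i * v i j)" for j
    using ut_def pp split1[of "\<lambda>i. u i * v i j"] u1 by simp
  define b0 where "b0 = (\<lambda>i::nat. if i = 1 then ut else v i)"
  have b0_basis: "is_lattice_basis Lt n b0"
    unfolding is_lattice_basis_def
  proof (intro conjI ballI)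
    fix i assume "i \<in> {1..n}" then show "b0 i \<in> Lt" using ut_in v_in by (simp add: b0_def)
  next
    fix x assume xL: "x \<in> Lt"
    obtain a where a: "x = (\<lambda>j. \<Sum>i\<in>{0..n}. of_int (a i) * ht i j)" using xL Lt_eq by auto
    define c where "c = (\<lambda>i. if i = 1 then a 0 + int p * a 1 else if 2 \<le> i \<and> i \<le> n then a i - a 1 * \<sigma> (i - 1) else 0)"
    have c0: "\<forall>i. i \<notin> {1..n} \<longrightarrow> c i = 0" using n1 by (auto simp: c_def)
    have cx: "x = (\<lambda>j. \<Sum>i\<in>{1..n}. of_int (c i) * b0 i j)"
    proof (rule ext)
      fix j
      have e1: "x j = of_int (a 0) * ut j + of_int (a 1) * v 1 j + (\<Sum>i\<in>{2..n}. of_int (a i) * v i j)"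
        unfolding a using split0[of "\<lambda>i. of_int (a i) * ht i j"] split1[of "\<lambda>i. of_int (a i) * ht i j"]
        by (simp add: ht_def)
      have e2: "(\<Sum>i\<in>{1..n}. of_int (c i) * b0 i j) = of_int (c 1) * ut j + (\<Sum>i\<in>{2..n}. of_int (c i) * v i j)"
        using split1[of "\<lambda>i. of_int (c i) * b0 i j"] by (simp add: b0_def)
      have e3: "(\<Sum>i\<in>{2..n}. of_int (c i) * v i j) = (\<Sum>i\<in>{2..n}. of_int (a i) * v i j) - of_int (a 1) * (\<Sum>i\<in>{2..n}. u i * v i j)"
      proof -
        have "(\<Sum>i\<in>{2..n}. of_int (c i) * v i j) = (\<Sum>i\<in>{2..n}. of_int (a i) * v i j - of_int (a 1) * (u i * v i j))"
          by (intro sum.cong) (auto simp: c_def uj algebra_simps)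
        then show ?thesis by (simp add: sum_subtractf sum_distrib_left)
      qed
      have "of_int (c 1) * ut j = of_int (a 0) * ut j + of_int (a 1) * (real p * ut j)"
        by (simp add: c_def algebra_simps)
      then show "x j = (\<Sum>i\<in>{1..n}. of_int (c i) * b0 i j)"
        using e1 e2 e3 e4[of j] by (simp add: algebra_simps)
    qed
    have uniq: "c' = c" if c'0: "\<forall>i. i \<notin> {1..n} \<longrightarrow> c' i = 0" and c'x: "x = (\<lambda>j. \<Sum>i\<in>{1..n}. of_int (c' i) * b0 i j)" for c'
    proof -
      define d where "d i = c' i - c i" for i
      have D: "(\<Sum>i\<in>{1..n}. of_int (d i) * b0 i j) = 0" for j
      proof -
        have "(\<Sum>i\<in>{1..n}. of_int (c' i) * b0 i j) = (\<Sum>i\<in>{1..n}. of_int (c i) * b0 i j)"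
          using fun_cong[OF c'x, of j] fun_cong[OF cx, of j] by simp
        then show ?thesis by (simp add: d_def algebra_simps sum_subtractf)
      qed
      have D2: "of_int (d 1) * ut j + (\<Sum>i\<in>{2..n}. of_int (d i) * v i j) = 0" for j
        using D[of j] split1[of "\<lambda>i. of_int (d i) * b0 i j"] by (simp add: b0_def)
      have "(\<Sum>i\<in>{2..n}. of_int (d i) * v i 1) = 0"
        using n1 by (intro sum.neutral) (auto simp: vj)
      then have d1: "d 1 = 0" using D2[of 1] utj[of 1] u1 n1 by simp
      have dk: "d k = 0" if k: "k \<in> {2..n}" for k
      proof -
        have "(\<Sum>i\<in>{2..n}. of_int (d i) * v i k) = (\<Sum>i\<in>{2..n}. if i = k then of_int (d k) * real p else 0)"
          using k by (intro sum.cong) (auto simp: vj)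
        also have "\<dots> = of_int (d k) * real p" using k by simp
        finally show ?thesis using D2[of k] d1 pp by simp
      qed
      show ?thesis
      proof
        fix i
        show "c' i = c i"
        proof (cases "i \<in> {1..n}")
          case True
          then have "i = 1 \<or> i \<in> {2..n}" by auto
          then show ?thesis using d1 dk unfolding d_def by auto
        qed (use c0 c'0 in auto)
      qed
    qed
    show "\<exists>!c. (\<forall>i. i \<notin> {1..n} \<longrightarrow> c i = 0) \<and> x = (\<lambda>j. \<Sum>i\<in>{1..n}. of_int (c i) * b0 i j)"
      using c0 cx uniq by blast
  qed
  have b0max: "(MAX i\<in>{1..n}. qnorm q (n+1) (b0 i)) < R"
  proof -
    have "\<forall>i\<in>{1..n}. qnorm q (n+1) (b0 i) < R"
    proof
      fix i assume i: "i \<in> {1..n}"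
      show "qnorm q (n+1) (b0 i) < R"
      proof (cases "i = 1")
        case True then show ?thesis using norm_ut by (simp add: b0_def)
      next
        case False then show ?thesis using norm_v[of i] i by (simp add: b0_def)
      qed
    qed
    then show ?thesis using n1 by (subst Max_less_iff) auto
  qed
  have vkk: "v k k = real p" if "k \<in> {1..n}" for k using vj[of k k] that by simp
  have vkj: "v k j = 0" if "k \<in> {1..n}" "j \<in> {1..n}" "j \<noteq> k" for k j using vj[of k j] that by simp
  have ut1: "ut 1 = 1" using utj[of 1] u1 n1 by simp
  show ?thesis
  proof (intro allI impI ballI)
    fix b i
    assume H: "is_lattice_basis Lt n b \<and> (\<forall>b'. is_lattice_basis Lt n b' \<longrightarrow>
              (MAX i\<in>{1..n}. qnorm q (n + 1) (b i)) \<le> (MAX i\<in>{1..n}. qnorm q (n + 1) (b' i)))"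
      and i: "i \<in> {1..n}"
    show "b i \<noteq> v 1 \<and> b i \<noteq> (\<lambda>j. - v 1 j)"
    proof (rule ccontr)
      assume "\<not> (b i \<noteq> v 1 \<and> b i \<noteq> (\<lambda>j. - v 1 j))"
      then have bi: "b i = v 1 \<or> b i = (\<lambda>j. - v 1 j)" by auto
      have binL: "b k \<in> Lt" if "k \<in> {1..n}" for k using H that unfolding is_lattice_basis_def by blast
      have rep: "\<exists>c::nat\<Rightarrow>int. x = (\<lambda>j. \<Sum>k\<in>{1..n}. of_int (c k) * b k j)" if "x \<in> Lt" for x
        using H that unfolding is_lattice_basis_def by blast
      have bR: "qnorm q (n+1) (b k) < R" if k: "k \<in> {1..n}" for k
      proof -
        have "qnorm q (n+1) (b k) \<le> (MAX i\<in>{1..n}. qnorm q (n + 1) (b i))"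
          using k by (intro Max_ge) auto
        also have "\<dots> \<le> (MAX i\<in>{1..n}. qnorm q (n + 1) (b0 i))" using H b0_basis by blast
        finally show ?thesis using b0max by simp
      qed
      have cls: "b k = (\<lambda>j. 0) \<or> (\<exists>m\<in>{1..n}. b k = v m \<or> b k = (\<lambda>j. - v m j)) \<or> b k = ut \<or> b k = (\<lambda>j. - ut j)"
        if k: "k \<in> {1..n}" for k using small[OF binL[OF k] bR[OF k]] .
      have coord: "\<exists>M::int. x j = d * of_int M"
        if xL: "x \<in> Lt" and hm: "\<forall>k\<in>{1..n}. \<exists>m::int. b k j = d * of_int m" for x j d
      proof -
        obtain c where c: "x = (\<lambda>j. \<Sum>k\<in>{1..n}. of_int (c k) * b k j)" using rep[OF xL] by blast
        from hm obtain mm where mm: "\<forall>k\<in>{1..n}. b k j = d * of_int (mm k)" by metis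
        have "x j = (\<Sum>k\<in>{1..n}. d * of_int (c k * mm k))"
          unfolding c using mm by (auto intro!: sum.cong simp: algebra_simps)
        also have "\<dots> = d * of_int (\<Sum>k\<in>{1..n}. c k * mm k)" by (simp add: sum_distrib_left)
        finally show ?thesis by blast
      qed
      show False
      proof (cases "\<exists>i1\<in>{1..n}. b i1 = ut \<or> b i1 = (\<lambda>j. - ut j)")
        case False
        have "\<forall>k\<in>{1..n}. \<exists>m::int. b k 1 = real p * of_int m"
        proof
          fix k assume k: "k \<in> {1..n}"
          from cls[OF k] False k show "\<exists>m::int. b k 1 = real p * of_int m"
          proof (elim disjE bexE)
            fix m assume m: "m \<in> {1..n}" "b k = v m"
            show ?thesis using m vj[of m 1] n1 by (intro exI[of _ "if m = 1 then 1 else 0"]) auto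
          next
            fix m assume m: "m \<in> {1..n}" "b k = (\<lambda>j. - v m j)"
            show ?thesis using m vj[of m 1] n1 by (intro exI[of _ "if m = 1 then -1 else 0"]) auto
          qed (auto intro: exI[of _ 0])
        qed
        then obtain M :: int where "ut 1 = real p * of_int M" using coord[OF ut_in] by blast
        then have "real_of_int (int p * M) = real_of_int 1" using ut1 by simp
        then have "int p * M = 1" by (simp only: of_int_eq_iff)
        then show False using p_ge by (auto simp: zmult_eq_1_iff)
      next
        case True
        then obtain i1 where i1: "i1 \<in> {1..n}" "b i1 = ut \<or> b i1 = (\<lambda>j. - ut j)" by blast
        have "\<exists>k\<in>{2..n}. \<forall>m\<in>{1..n}. b m \<noteq> v k \<and> b m \<noteq> (\<lambda>j. - v k j)"
        proof (rule ccontr)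
          assume "\<not> ?thesis"
          then have "\<forall>k\<in>{2..n}. \<exists>m. m \<in> {1..n} \<and> (b m = v k \<or> b m = (\<lambda>j. - v k j))" by blast
          then obtain f where f: "\<forall>k\<in>{2..n}. f k \<in> {1..n} \<and> (b (f k) = v k \<or> b (f k) = (\<lambda>j. - v k j))"
            by metis
          have fk: "b (f k) k = real p \<or> b (f k) k = - real p" if "k \<in> {2..n}" for k
          proof -
            have "b (f k) = v k \<or> b (f k) = (\<lambda>j. - v k j)" using f that by blast
            moreover have "v k k = real p" using vkk[of k] that by auto
            ultimately show ?thesis by auto
          qed
          have fk': "b (f k) k' = 0" if "k \<in> {2..n}" "k' \<in> {1..n}" "k' \<noteq> k" for k k'
          proof -
            have "b (f k) = v k \<or> b (f k) = (\<lambda>j. - v k j)" using f that by blast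
            moreover have "v k k' = 0" using vkj[of k k'] that by auto
            ultimately show ?thesis by auto
          qed
          have inj: "inj_on f {2..n}"
          proof (rule inj_onI)
            fix k k' assume k: "k \<in> {2..n}" and k': "k' \<in> {2..n}" and e: "f k = f k'"
            show "k = k'"
            proof (rule ccontr)
              assume "k \<noteq> k'"
              then have "b (f k') k = 0" using fk'[OF k', of k] k by auto
              then show False using fk[OF k] e pp by auto
            qed
          qed
          have bi1: "b i 1 = real p \<or> b i 1 = - real p" using bi vkk[of 1] n1 by auto
          have bi11: "b i1 1 = 1 \<or> b i1 1 = - 1" using i1 ut1 by auto
          have sub: "f ` {2..n} \<subseteq> {1..n} - {i, i1}"
          proof
            fix y assume "y \<in> f ` {2..n}"
            then obtain k where k: "k \<in> {2..n}" "y = f k" by blast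
            have "b (f k) 1 = 0" using fk'[OF k(1), of 1] k by auto
            moreover have "b i k = 0" using bi vkj[of 1 k] k n1 by auto
            ultimately show "y \<in> {1..n} - {i, i1}" using k f fk[OF k(1)] bi11 pp by auto
          qed
          have "i \<noteq> i1" using bi1 bi11 p_ge by auto
          then have "card ({1..n} - {i, i1}) = n - 2" using i i1 by (subst card_Diff_subset) auto
          moreover have "card {2..n} \<le> card ({1..n} - {i, i1})"
            by (rule card_inj_on_le[OF inj sub]) auto
          ultimately show False using n_ge by simp
        qed
        then obtain k where k: "k \<in> {2..n}" and nk: "\<forall>m\<in>{1..n}. b m \<noteq> v k \<and> b m \<noteq> (\<lambda>j. - v k j)" by blast
        have k1: "k \<in> {1..n}" using k by auto
        have "\<forall>m\<in>{1..n}. \<exists>z::int. b m k = u k * of_int z"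
        proof
          fix m assume m: "m \<in> {1..n}"
          from cls[OF m] show "\<exists>z::int. b m k = u k * of_int z"
          proof (elim disjE bexE)
            fix m' assume m': "m' \<in> {1..n}" "b m = v m'"
            then have "m' \<noteq> k" using nk m by auto
            then show ?thesis using m' vkj[of m' k] k1 by (intro exI[of _ 0]) auto
          next
            fix m' assume m': "m' \<in> {1..n}" "b m = (\<lambda>j. - v m' j)"
            then have "m' \<noteq> k" using nk m by auto
            then show ?thesis using m' vkj[of m' k] k1 by (intro exI[of _ 0]) auto
          next
            assume "b m = ut" then show ?thesis using utj[OF k1] by (intro exI[of _ 1]) auto
          next
            assume "b m = (\<lambda>j. - ut j)" then show ?thesis using utj[OF k1] by (intro exI[of _ "-1"]) auto
          qed (auto intro: exI[of _ 0])
        qed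
        then obtain M :: int where "v k k = u k * of_int M" using coord[OF v_in[OF k1]] by blast
        then have "real_of_int (int p) = real_of_int (\<sigma> (k - 1) * M)" using vkk[OF k1] uj[OF k] by simp
        then have "int p = \<sigma> (k - 1) * M" by (simp only: of_int_eq_iff)
        then have dv: "\<sigma> (k - 1) dvd int p" by simp
        have "k - 1 \<in> {1..n-1}" using k by auto
        then have s: "\<sigma> (k - 1) = 2 \<or> \<sigma> (k - 1) = 3" using sig by blast
        have "prime (int p)" using p_prime by simp
        then have "\<sigma> (k - 1) = 1 \<or> \<sigma> (k - 1) = int p"
        proof -
          have "\<forall>m. 0 \<le> m \<and> m dvd int p \<longrightarrow> m = 1 \<or> m = int p"
            using \<open>prime (int p)\<close> unfolding prime_int_iff by blast
          moreover have "0 \<le> \<sigma> (k - 1)" using s by auto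
          ultimately show ?thesis using dv by blast
        qed
        then show False using s p_ge by auto
      qed
    qed
  qed
qed
end
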